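(* There is a function $g$ such that the following holds. Let $A \in \mathbb{Z}^{m \times n}$ and let $F$ be a td-decomposition of the dual graph $G_D(A)$. Let $A_B \in \mathbb{Z}^{m \times m}$ be a submatrix of $A$ formed by a collection of $m$ columns of $A$ which is invertible. Then $\mathrm{fr}(A_B^{-1}) \le g(\mathrm{height}(F), \|A\|_\infty)$.
   Context: The primal graph $G_P(M)$ of a matrix $M$ has one vertex per column of $M$, two columns adjacent if some row has non-zero entries in both; the dual graph is $G_D(A) := G_P(A^{\intercal})$ (vertices are rows of $A$, adjacent if some column has non-zero entries in both). For a rooted tree $F$, $\mathrm{cl}(F)$ is the graph obtained by making each vertex adjacent to all its ancestors; $\mathrm{height}(F)$ is the maximum number of vertices on a root-leaf path. A td-decomposition of a graph $G$ is a rooted tree $F$ on the vertex set of $G$ with $G \subseteq \mathrm{cl}(F)$. For a rational matrix $M$, $\mathrm{fr}(M)$ is the maximum denominator among its entries written in lowest terms. *)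

theory Defs
  imports "Jordan_Normal_Form.DL_Submatrix"
begin

definition dual_graph_edge :: "int mat \<Rightarrow> nat \<Rightarrow> nat \<Rightarrow> bool" where
  "dual_graph_edge A i j \<longleftrightarrow> i < dim_row A \<and> j < dim_row A \<and> i \<noteq> j \<and>
     (\<exists>k < dim_col A. A $$ (i,k) \<noteq> 0 \<and> A $$ (j,k) \<noteq> 0)"

(* A rooted tree on the finite vertex set V, given by its child-parent edge set P:
   (v,u) \<in> P means u is the parent of v. *)
definition rooted_tree :: "nat set \<Rightarrow> (nat \<times> nat) set \<Rightarrow> bool" where
  "rooted_tree V P \<longleftrightarrow> finite V \<and> P \<subseteq> V \<times> V \<and>
     (\<forall>v u w. (v,u) \<in> P \<longrightarrow> (v,w) \<in> P \<longrightarrow> u = w) \<and>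
     (\<forall>v. (v,v) \<notin> P\<^sup>+) \<and>
     (V \<noteq> {} \<longrightarrow> (\<exists>!r. r \<in> V \<and> (\<forall>u. (r,u) \<notin> P)))"

definition ancestor :: "(nat \<times> nat) set \<Rightarrow> nat \<Rightarrow> nat \<Rightarrow> bool" where
  "ancestor P u v \<longleftrightarrow> (v,u) \<in> P\<^sup>+"

definition closure_adj :: "(nat \<times> nat) set \<Rightarrow> nat \<Rightarrow> nat \<Rightarrow> bool" where
  "closure_adj P u v \<longleftrightarrow> ancestor P u v \<or> ancestor P v u"

(* height: maximum number of vertices on a root-leaf path, i.e. the maximum over
   vertices v of the number of vertices on the path from v to the root (0 if V = {}) *)
definition tree_height :: "nat set \<Rightarrow> (nat \<times> nat) set \<Rightarrow> nat" where
  "tree_height V P = Max (insert 0 ((\<lambda>v. card {u. (v,u) \<in> P\<^sup>*}) ` V))"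

definition td_decomposition :: "nat set \<Rightarrow> (nat \<Rightarrow> nat \<Rightarrow> bool) \<Rightarrow> (nat \<times> nat) set \<Rightarrow> bool" where
  "td_decomposition V E P \<longleftrightarrow> rooted_tree V P \<and> (\<forall>u v. E u v \<longrightarrow> closure_adj P u v)"

(* fr(M): maximum denominator among the entries (in lowest terms); 1 for an empty matrix *)
definition fr :: "rat mat \<Rightarrow> int" where
  "fr M = Max (insert 1 {snd (quotient_of (M $$ (i,j))) | i j. i < dim_row M \<and> j < dim_col M})"

definition max_abs_entry :: "int mat \<Rightarrow> int" where
  "max_abs_entry A = Max (insert 0 {\<bar>A $$ (i,j)\<bar> | i j. i < dim_row A \<and> j < dim_col A})"

end

theory Submission
  imports Defs "Jordan_Normal_Form.Determinant"
begin

definition kerv :: "(nat \<Rightarrow> nat \<Rightarrow> rat) \<Rightarrow> nat set \<Rightarrow> nat set \<Rightarrow> (nat \<Rightarrow> rat) \<Rightarrow> bool" where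
  "kerv a C R x \<longleftrightarrow> (\<forall>c. c \<notin> C \<longrightarrow> x c = 0) \<and> (\<forall>r\<in>R. (\<Sum>c\<in>C. a r c * x c) = 0)"

definition suppv :: "(nat \<Rightarrow> rat) \<Rightarrow> nat set" where
  "suppv x = {c. x c \<noteq> 0}"

definition circ :: "(nat \<Rightarrow> nat \<Rightarrow> rat) \<Rightarrow> nat set \<Rightarrow> nat set \<Rightarrow> (nat \<Rightarrow> rat) \<Rightarrow> bool" where
  "circ a C R z \<longleftrightarrow> kerv a C R z \<and> z \<noteq> (\<lambda>_. 0) \<and>
     (\<forall>y. kerv a C R y \<longrightarrow> suppv y \<subseteq> suppv z \<longrightarrow> (\<exists>t. y = (\<lambda>c. t * z c)))"

definition conf :: "(nat \<Rightarrow> rat) \<Rightarrow> (nat \<Rightarrow> rat) \<Rightarrow> bool" where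
  "conf y x \<longleftrightarrow> (\<forall>c. 0 \<le> y c * x c \<and> (x c = 0 \<longrightarrow> y c = 0))"

definition bnd :: "nat set \<Rightarrow> rat \<Rightarrow> (nat \<Rightarrow> rat) \<Rightarrow> bool" where
  "bnd C K z \<longleftrightarrow> (\<exists>t>0. (\<forall>c. t * z c \<in> \<int>) \<and> (\<Sum>c\<in>C. \<bar>t * z c\<bar>) \<le> K)"

lemma kerv_lin:
  assumes "kerv a C R x" "kerv a C R y"
  shows "kerv a C R (\<lambda>c. p * x c + q * y c)"
proof -
  have "(\<Sum>c\<in>C. a r c * (p * x c + q * y c)) = p * (\<Sum>c\<in>C. a r c * x c) + q * (\<Sum>c\<in>C. a r c * y c)" for r
    by (simp add: sum.distrib sum_distrib_left algebra_simps)
  then show ?thesis using assms unfolding kerv_def by auto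
qed

lemma kerv_scale: "kerv a C R x \<Longrightarrow> kerv a C R (\<lambda>c. p * x c)"
  using kerv_lin[of a C R x x p 0] by simp

lemma kerv_diff: "kerv a C R x \<Longrightarrow> kerv a C R y \<Longrightarrow> kerv a C R (\<lambda>c. x c - q * y c)"
  using kerv_lin[of a C R x y 1 "-q"] by simp

lemma kerv_mono: "kerv a C R x \<Longrightarrow> S \<subseteq> R \<Longrightarrow> kerv a C S x"
  unfolding kerv_def by auto

lemma suppv_fin: "kerv a C R x \<Longrightarrow> finite C \<Longrightarrow> finite (suppv x)"
  unfolding kerv_def suppv_def by (metis (mono_tags, lifting) mem_Collect_eq rev_finite_subset subsetI)

lemma conf_refl: "conf x x"
  unfolding conf_def by auto

lemma conf_trans: "conf g y \<Longrightarrow> conf y x \<Longrightarrow> conf g x"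
  unfolding conf_def
proof (intro allI conjI impI)
  fix c assume h: "\<forall>c. 0 \<le> g c * y c \<and> (y c = 0 \<longrightarrow> g c = 0)" "\<forall>c. 0 \<le> y c * x c \<and> (x c = 0 \<longrightarrow> y c = 0)"
  show "x c = 0 \<Longrightarrow> g c = 0" using h by auto
  have a: "0 \<le> g c * y c" "0 \<le> y c * x c" using h by auto
  show "0 \<le> g c * x c"
  proof (cases "y c = 0")
    case True then show ?thesis using h by auto
  next
    case False
    have "0 \<le> (g c * y c) * (y c * x c)" using a by simp
    also have "\<dots> = (g c * x c) * (y c * y c)" by (simp add: algebra_simps)
    finally have h1: "0 \<le> (g c * x c) * (y c * y c)" .
    have h2: "y c * y c > 0" using False by (simp add: not_square_less_zero less_le)
    show ?thesis using h1 h2 by (meson not_le mult_neg_pos)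
  qed
qed

lemma conf_supp: "conf y x \<Longrightarrow> suppv y \<subseteq> suppv x"
  unfolding conf_def suppv_def by auto

lemma step:
  assumes fin: "finite (suppv y)" and sub: "\<forall>c. y c = 0 \<longrightarrow> v c = 0" and c0: "v c0 * y c0 > 0"
  shows "\<exists>\<mu>>0. conf (\<lambda>c. y c - \<mu> * v c) y \<and> (\<exists>c1. y c1 \<noteq> 0 \<and> y c1 - \<mu> * v c1 = 0)"
proof -
  define S where "S = {c. v c * y c > 0}"
  have Ss: "S \<subseteq> suppv y" unfolding S_def suppv_def by auto
  have finS: "finite S" using Ss fin finite_subset by auto
  have c0S: "c0 \<in> S" using c0 S_def by auto
  define \<mu> where "\<mu> = Min ((\<lambda>c. y c / v c) ` S)"
  have pos: "y c / v c > 0" if "c \<in> S" for c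
    using that unfolding S_def by (auto simp add: zero_less_mult_iff zero_less_divide_iff)
  have le: "\<mu> \<le> y c / v c" if "c \<in> S" for c
    unfolding \<mu>_def using finS that by auto
  have "\<mu> \<in> (\<lambda>c. y c / v c) ` S" unfolding \<mu>_def using finS c0S by (intro Min_in) auto
  then obtain c1 where c1: "c1 \<in> S" "\<mu> = y c1 / v c1" by auto
  have mpos: "\<mu> > 0" using c1 pos by auto
  have "conf (\<lambda>c. y c - \<mu> * v c) y"
    unfolding conf_def
  proof (intro allI conjI impI)
    fix c
    show "y c = 0 \<Longrightarrow> y c - \<mu> * v c = 0" using sub by auto
    show "0 \<le> (y c - \<mu> * v c) * y c"
    proof (cases "c \<in> S")
      case True
      then have vy: "v c * y c > 0" unfolding S_def by auto
      have m: "\<mu> \<le> y c / v c" using le True by auto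
      show ?thesis
      proof (cases "v c > 0")
        case True
        then have "y c > 0" using vy by (simp add: zero_less_mult_iff)
        have "\<mu> * v c \<le> y c" using m True by (simp add: le_divide_eq)
        then show ?thesis using \<open>y c > 0\<close> by simp
      next
        case False
        then have "v c < 0" using vy by (cases "v c = 0") auto
        then have "y c < 0" using vy by (simp add: zero_less_mult_iff)
        have "\<mu> * v c \<ge> y c" using m \<open>v c < 0\<close> by (simp add: divide_le_eq le_divide_eq_1 mult.commute pos_le_divide_eq neg_le_divide_eq)
        then show ?thesis using \<open>y c < 0\<close> by (simp add: mult_nonpos_nonpos)
      qed
    next
      case False
      then have "v c * y c \<le> 0" unfolding S_def by auto
      then have "0 \<le> y c * y c - \<mu> * (v c * y c)" using mpos
        by (metis diff_ge_0_iff_ge mult_nonneg_nonpos order.trans zero_le_square less_imp_le)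
      then show ?thesis by (simp add: algebra_simps)
    qed
  qed
  moreover have "y c1 \<noteq> 0" "y c1 - \<mu> * v c1 = 0" using c1 unfolding S_def by auto
  ultimately show ?thesis using mpos by blast
qed

lemma card_less_aux: "finite A \<Longrightarrow> c \<in> A \<Longrightarrow> B \<subseteq> A - {c} \<Longrightarrow> card B < card A"
proof -
  assume a: "finite A" "c \<in> A" "B \<subseteq> A - {c}"
  then have "card B \<le> card (A - {c})" by (intro card_mono) auto
  also have "\<dots> < card A" using a by (intro card_Diff1_less) auto
  finally show ?thesis .
qed

lemma nonmult_step:
  assumes fin: "finite C" and kx: "kerv a C R x" and x0: "x \<noteq> (\<lambda>_. 0)"
    and ky: "kerv a C R y" and sy: "suppv y \<subseteq> suppv x" and nm: "\<not> (\<exists>t. y = (\<lambda>c. t * x c))"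
  shows "\<exists>x'. kerv a C R x' \<and> x' \<noteq> (\<lambda>_. 0) \<and> conf x' x \<and> card (suppv x') < card (suppv x)"
proof -
  have "y \<noteq> (\<lambda>_. 0)" using nm by (metis mult_zero_left)
  then obtain c0 where "y c0 \<noteq> 0" by auto
  then have "x c0 \<noteq> 0" using sy unfolding suppv_def by auto
  then have "y c0 * x c0 \<noteq> 0" using \<open>y c0 \<noteq> 0\<close> by simp
  then obtain v where v: "v = y \<or> v = (\<lambda>c. - y c)" and vc0: "v c0 * x c0 > 0"
    by (metis linorder_neqE_linordered_idom mult_minus_left neg_0_less_iff_less)
  have kv: "kerv a C R v" using v ky kerv_scale[of a C R y "-1"] by auto
  have nmv: "\<not> (\<exists>t. v = (\<lambda>c. t * x c))"
  proof
    assume "\<exists>t. v = (\<lambda>c. t * x c)"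
    then obtain t where vt: "v = (\<lambda>c. t * x c)" by auto
    show False
    proof (cases "v = y")
      case True then show False using nm vt by blast
    next
      case False
      then have "v = (\<lambda>c. - y c)" using v by blast
      then have "y = (\<lambda>c. (-t) * x c)" using vt
        by (metis (no_types, lifting) minus_minus mult_minus_left)
      then show False using nm by blast
    qed
  qed
  have sub: "\<forall>c. x c = 0 \<longrightarrow> v c = 0" using sy v unfolding suppv_def by auto
  obtain \<mu> c1 where mu: "\<mu> > 0" "conf (\<lambda>c. x c - \<mu> * v c) x" "x c1 \<noteq> 0" "x c1 - \<mu> * v c1 = 0"
    using step[OF suppv_fin[OF kx fin] sub vc0] by blast
  define x' where "x' = (\<lambda>c. x c - \<mu> * v c)"
  have k': "kerv a C R x'" unfolding x'_def using kerv_diff[OF kx kv] .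
  have nz: "x' \<noteq> (\<lambda>_. 0)"
  proof
    assume "x' = (\<lambda>_. 0)"
    then have "v = (\<lambda>c. (1/\<mu>) * x c)" using mu(1) unfolding x'_def by (auto simp: fun_eq_iff field_simps)
    then show False using nmv by blast
  qed
  have "suppv x' \<subseteq> suppv x - {c1}" using conf_supp[OF mu(2)] mu(4) unfolding x'_def suppv_def by auto
  then have "card (suppv x') < card (suppv x)"
    using card_less_aux[OF suppv_fin[OF kx fin]] mu(3) unfolding suppv_def by blast
  then show ?thesis using k' nz mu(2) x'_def by blast
qed

lemma exists_conf_circ:
  assumes fin: "finite C"
  shows "kerv a C R x \<Longrightarrow> x \<noteq> (\<lambda>_. 0) \<Longrightarrow> \<exists>g. circ a C R g \<and> conf g x"
proof (induction "card (suppv x)" arbitrary: x rule: less_induct)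
  case (less x)
  show ?case
  proof (cases "circ a C R x")
    case True then show ?thesis using conf_refl by blast
  next
    case False
    then obtain y where y: "kerv a C R y" "suppv y \<subseteq> suppv x" "\<not> (\<exists>t. y = (\<lambda>c. t * x c))"
      using less.prems unfolding circ_def by blast
    obtain x' where x': "kerv a C R x'" "x' \<noteq> (\<lambda>_. 0)" "conf x' x" "card (suppv x') < card (suppv x)"
      using nonmult_step[OF fin less.prems y] by blast
    obtain g where "circ a C R g" "conf g x'" using less.hyps[OF x'(4) x'(1,2)] by blast
    then show ?thesis using conf_trans x'(3) by blast
  qed
qed

lemma exists_conf_circ_phi:
  assumes fin: "finite C"
  shows "kerv a C R x \<Longrightarrow> x \<noteq> (\<lambda>_. 0) \<Longrightarrow> (\<Sum>c\<in>C. b c * x c) \<le> 0 \<Longrightarrow>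
     \<exists>g. circ a C R g \<and> conf g x \<and> (\<Sum>c\<in>C. b c * g c) \<le> 0"
proof (induction "card (suppv x)" arbitrary: x rule: less_induct)
  case (less x)
  obtain g where g: "circ a C R g" "conf g x" using exists_conf_circ[OF fin less.prems(1,2)] by blast
  show ?case
  proof (cases "(\<Sum>c\<in>C. b c * g c) \<le> 0")
    case True then show ?thesis using g by blast
  next
    case False
    have "g \<noteq> (\<lambda>_. 0)" using g(1) unfolding circ_def by auto
    then obtain c0 where "g c0 \<noteq> 0" by auto
    then have "x c0 \<noteq> 0" using g(2) unfolding conf_def by auto
    then have gc0: "g c0 * x c0 > 0" using g(2) \<open>g c0 \<noteq> 0\<close> unfolding conf_def
      by (metis less_eq_rat_def mult_eq_0_iff)
    have sub: "\<forall>c. x c = 0 \<longrightarrow> g c = 0" using g(2) unfolding conf_def by auto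
    obtain \<mu> c1 where mu: "\<mu> > 0" "conf (\<lambda>c. x c - \<mu> * g c) x" "x c1 \<noteq> 0" "x c1 - \<mu> * g c1 = 0"
      using step[OF suppv_fin[OF less.prems(1) fin] sub gc0] by blast
    define x' where "x' = (\<lambda>c. x c - \<mu> * g c)"
    have kg: "kerv a C R g" using g(1) unfolding circ_def by auto
    have k': "kerv a C R x'" unfolding x'_def using kerv_diff[OF less.prems(1) kg] .
    have "(\<Sum>c\<in>C. b c * x' c) = (\<Sum>c\<in>C. b c * x c) - \<mu> * (\<Sum>c\<in>C. b c * g c)"
      unfolding x'_def by (simp add: sum_subtractf sum_distrib_left algebra_simps)
    also have "\<dots> < 0"
    proof -
      have "\<mu> * (\<Sum>c\<in>C. b c * g c) > 0" using False mu(1) by simp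
      then show ?thesis using less.prems(3) by linarith
    qed
    finally have ph: "(\<Sum>c\<in>C. b c * x' c) < 0" .
    then have nz: "x' \<noteq> (\<lambda>_. 0)" by auto
    have "suppv x' \<subseteq> suppv x - {c1}" using conf_supp[OF mu(2)] mu(4) unfolding x'_def suppv_def by auto
    then have "card (suppv x') < card (suppv x)"
      using card_less_aux[OF suppv_fin[OF less.prems(1) fin]] mu(3) unfolding suppv_def by blast
    then obtain g' where "circ a C R g'" "conf g' x'" "(\<Sum>c\<in>C. b c * g' c) \<le> 0"
      using less.hyps[OF _ k' nz] ph by fastforce
    then show ?thesis using conf_trans mu(2) x'_def by blast
  qed
qed

lemma mult_circ:
  assumes "circ a C R z" "kerv a C R w" "conf w z" "w \<noteq> (\<lambda>_. 0)"
  shows "\<exists>s>0. w = (\<lambda>c. s * z c)"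
proof -
  obtain s where s: "w = (\<lambda>c. s * z c)" using assms conf_supp unfolding circ_def by blast
  obtain c where "w c \<noteq> 0" using assms(4) by auto
  then have "z c \<noteq> 0" "s \<noteq> 0" using s by auto
  have "0 \<le> w c * z c" using assms(3) unfolding conf_def by auto
  then have "0 \<le> s * (z c * z c)" using s by (simp add: algebra_simps)
  moreover have "z c * z c > 0" using \<open>z c \<noteq> 0\<close> by (simp add: not_square_less_zero less_le)
  ultimately have "s \<ge> 0" by (meson not_le mult_neg_pos)
  then show ?thesis using s \<open>s \<noteq> 0\<close> by (intro exI[of _ s]) auto
qed

lemma unit_bnd:
  assumes fin: "finite C" and g: "circ a C R g" and c0: "c0 \<in> C" "g c0 \<noteq> 0"
    and z: "\<forall>r\<in>R. a r c0 = 0"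
  shows "bnd C 1 g"
proof -
  define e where "e = (\<lambda>c. if c = c0 then (1::rat) else 0)"
  have "(\<Sum>c\<in>C. a r c * e c) = a r c0" for r
    unfolding e_def using fin c0 by (simp add: if_distrib cong: if_cong)
  then have ke: "kerv a C R e" using z c0 unfolding kerv_def e_def by auto
  have "suppv e \<subseteq> suppv g" using c0 unfolding suppv_def e_def by auto
  then obtain t where t: "e = (\<lambda>c. t * g c)" using g ke unfolding circ_def by blast
  have gz: "g c = 0" if "c \<noteq> c0" for c
  proof -
    have "t * g c = 0" using t that unfolding e_def by (metis)
    moreover have "t \<noteq> 0" using t unfolding e_def by (metis mult_zero_left zero_neq_one)
    ultimately show ?thesis by simp
  qed
  define s where "s = 1 / \<bar>g c0\<bar>"
  have spos: "s > 0" using c0 unfolding s_def by simp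
  have ints: "s * g c \<in> \<int>" for c
  proof (cases "c = c0")
    case True
    have "s * g c0 = sgn (g c0)" unfolding s_def using c0 by (simp add: sgn_if)
    then show ?thesis using True by (simp add: sgn_if)
  next
    case False then show ?thesis using gz by simp
  qed
  have "(\<Sum>c\<in>C. \<bar>s * g c\<bar>) = \<bar>s * g c0\<bar>"
  proof -
    have "(\<Sum>c\<in>C. \<bar>s * g c\<bar>) = \<bar>s * g c0\<bar> + (\<Sum>c\<in>C - {c0}. \<bar>s * g c\<bar>)"
      using fin c0 by (simp add: sum.remove)
    also have "(\<Sum>c\<in>C - {c0}. \<bar>s * g c\<bar>) = 0" using gz by (intro sum.neutral) auto
    finally show ?thesis by simp
  qed
  also have "\<dots> = 1" unfolding s_def using c0 by (simp add: abs_mult)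
  finally show ?thesis unfolding bnd_def using spos ints by auto
qed

lemma bnd_mono: "bnd C K z \<Longrightarrow> K \<le> K' \<Longrightarrow> bnd C K' z"
  unfolding bnd_def by force

lemma circ_restrict:
  assumes g: "circ a C R' g" and SR: "S \<subseteq> R'"
    and closed: "\<forall>s\<in>S. \<forall>y\<in>R' - S. \<forall>c\<in>C. a s c \<noteq> 0 \<longrightarrow> a y c = 0"
    and c0: "c0 \<in> C" "g c0 \<noteq> 0" "s0 \<in> S" "a s0 c0 \<noteq> 0"
  shows "circ a C S g"
proof -
  define CS where "CS = {c\<in>C. \<exists>s\<in>S. a s c \<noteq> 0}"
  define gS where "gS = (\<lambda>c. if c \<in> CS then g c else 0)"
  have kg: "kerv a C R' g" using g unfolding circ_def by auto
  have outS: "a y c = 0" if "y \<in> R' - S" "c \<in> CS" for y c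
    using that closed unfolding CS_def by blast
  have "kerv a C R' gS"
    unfolding kerv_def
  proof (intro conjI allI impI ballI)
    fix c assume "c \<notin> C" then show "gS c = 0" unfolding gS_def CS_def by auto
  next
    fix y assume y: "y \<in> R'"
    show "(\<Sum>c\<in>C. a y c * gS c) = 0"
    proof (cases "y \<in> S")
      case True
      have "(\<Sum>c\<in>C. a y c * gS c) = (\<Sum>c\<in>C. a y c * g c)"
        using True unfolding gS_def CS_def by (intro sum.cong) auto
      also have "\<dots> = 0" using kg y unfolding kerv_def by auto
      finally show ?thesis .
    next
      case False
      have "(\<Sum>c\<in>C. a y c * gS c) = (\<Sum>c\<in>C. 0)"
        using False y outS unfolding gS_def by (intro sum.cong) auto
      then show ?thesis by simp
    qed
  qed
  moreover have "suppv gS \<subseteq> suppv g" unfolding suppv_def gS_def by auto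
  ultimately obtain t where t: "gS = (\<lambda>c. t * g c)" using g unfolding circ_def by blast
  have "c0 \<in> CS" using c0 unfolding CS_def by auto
  then have "g c0 = t * g c0" using t unfolding gS_def by metis
  then have "t = 1" using c0 by simp
  then have gCS: "g c \<noteq> 0 \<Longrightarrow> c \<in> CS" for c using t unfolding gS_def by (metis mult_1)
  show ?thesis
    unfolding circ_def
  proof (intro conjI allI impI)
    show "kerv a C S g" using kerv_mono[OF kg SR] .
    show "g \<noteq> (\<lambda>_. 0)" using g unfolding circ_def by auto
  next
    fix y assume ky: "kerv a C S y" and sy: "suppv y \<subseteq> suppv g"
    have "kerv a C R' y"
      unfolding kerv_def
    proof (intro conjI allI impI ballI)
      fix c assume "c \<notin> C" then show "y c = 0" using ky unfolding kerv_def by auto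
    next
      fix r assume r: "r \<in> R'"
      show "(\<Sum>c\<in>C. a r c * y c) = 0"
      proof (cases "r \<in> S")
        case True then show ?thesis using ky unfolding kerv_def by auto
      next
        case False
        have "(\<Sum>c\<in>C. a r c * y c) = (\<Sum>c\<in>C. 0)"
        proof (intro sum.cong refl)
          fix c assume "c \<in> C"
          show "a r c * y c = 0"
          proof (cases "y c = 0")
            case False
            then have "g c \<noteq> 0" using sy unfolding suppv_def by auto
            then have "c \<in> CS" using gCS by auto
            then show ?thesis using outS r \<open>r \<notin> S\<close> by auto
          qed simp
        qed
        then show ?thesis by simp
      qed
    qed
    then show "\<exists>t. y = (\<lambda>c. t * g c)" using g sy unfolding circ_def by blast
  qed
qed

definition subt :: "(nat \<times> nat) set \<Rightarrow> nat \<Rightarrow> nat set" where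
  "subt P v = {u. (u,v) \<in> P\<^sup>*}"

definition dep :: "(nat \<times> nat) set \<Rightarrow> nat \<Rightarrow> nat" where
  "dep P u = card {w. (u,w) \<in> P\<^sup>*}"

primrec ff :: "rat \<Rightarrow> nat \<Rightarrow> rat" where
  "ff D 0 = 1"
| "ff D (Suc n) = 2 * D * (ff D n)^2 + ff D n + 1"

lemma ff_ge1: "D \<ge> 0 \<Longrightarrow> ff D n \<ge> 1"
  by (induction n) auto

lemma chain_func:
  assumes func: "\<forall>v u w. (v,u) \<in> P \<longrightarrow> (v,w) \<in> P \<longrightarrow> u = w"
  shows "(u,x) \<in> P\<^sup>* \<Longrightarrow> (u,y) \<in> P\<^sup>* \<Longrightarrow> (x,y) \<in> P\<^sup>* \<or> (y,x) \<in> P\<^sup>*"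
proof (induction arbitrary: y rule: converse_rtrancl_induct)
  case base then show ?case by auto
next
  case (step u u')
  from step.prems show ?case
  proof (cases rule: converse_rtranclE)
    case base then show ?thesis using step.hyps by (meson converse_rtrancl_into_rtrancl)
  next
    case (step u'')
    then have "u'' = u'" using func \<open>(u,u') \<in> P\<close> by blast
    then show ?thesis using step.IH step.hyps(2) \<open>(u'', y) \<in> P\<^sup>*\<close> by blast
  qed
qed

lemma closed_sub:
  assumes func: "\<forall>v u w. (v,u) \<in> P \<longrightarrow> (v,w) \<in> P \<longrightarrow> u = w"
    and acyc: "\<forall>v. (v,v) \<notin> P\<^sup>+"
    and ch: "(ch,v) \<in> P" and s: "s \<in> subt P ch" and y: "y \<in> subt P v" "y \<noteq> v" "y \<notin> subt P ch"
  shows "(y,s) \<notin> P\<^sup>+ \<and> (s,y) \<notin> P\<^sup>+"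
proof
  show "(y,s) \<notin> P\<^sup>+"
  proof
    assume "(y,s) \<in> P\<^sup>+"
    then have "(y,ch) \<in> P\<^sup>*" using s unfolding subt_def by auto
    then show False using y unfolding subt_def by auto
  qed
  show "(s,y) \<notin> P\<^sup>+"
  proof
    assume "(s,y) \<in> P\<^sup>+"
    then have "(s,y) \<in> P\<^sup>*" by auto
    moreover have "(s,ch) \<in> P\<^sup>*" using s unfolding subt_def by auto
    ultimately have "(ch,y) \<in> P\<^sup>* \<or> (y,ch) \<in> P\<^sup>*" using chain_func[OF func] by blast
    then have "(ch,y) \<in> P\<^sup>*" using y unfolding subt_def by auto
    moreover have "ch \<noteq> y" using y unfolding subt_def by auto
    ultimately obtain w where "(ch,w) \<in> P" "(w,y) \<in> P\<^sup>*" by (metis converse_rtranclE)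
    then have "w = v" using func ch by blast
    then have "(v,y) \<in> P\<^sup>*" using \<open>(w,y) \<in> P\<^sup>*\<close> by simp
    moreover have "(y,v) \<in> P\<^sup>+" using y unfolding subt_def by (simp add: rtrancl_eq_or_trancl)
    ultimately have "(y,y) \<in> P\<^sup>+" by auto
    then show False using acyc by auto
  qed
qed

lemma anc_finite:
  assumes "P \<subseteq> V \<times> V" "finite V"
  shows "finite {w. (u,w) \<in> P\<^sup>*}"
proof -
  have "{w. (u,w) \<in> P\<^sup>*} \<subseteq> insert u V"
  proof
    fix w assume "w \<in> {w. (u,w) \<in> P\<^sup>*}"
    then have "(u,w) \<in> P\<^sup>*" by auto
    then show "w \<in> insert u V" using assms(1) by (cases rule: rtranclE) auto
  qed
  then show ?thesis using assms(2) finite_subset by blast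
qed

lemma dep_child:
  assumes "P \<subseteq> V \<times> V" "finite V" "\<forall>v. (v,v) \<notin> P\<^sup>+" "(ch,v) \<in> P"
  shows "dep P v < dep P ch"
proof -
  have "{w. (v,w) \<in> P\<^sup>*} \<subset> {w. (ch,w) \<in> P\<^sup>*}"
  proof
    show "{w. (v,w) \<in> P\<^sup>*} \<subseteq> {w. (ch,w) \<in> P\<^sup>*}" using assms(4)
      by (auto intro: converse_rtrancl_into_rtrancl)
    have "(v,ch) \<notin> P\<^sup>*"
    proof
      assume "(v,ch) \<in> P\<^sup>*"
      then have "(ch,ch) \<in> P\<^sup>+" using assms(4) by auto
      then show False using assms(3) by auto
    qed
    then show "{w. (v,w) \<in> P\<^sup>*} \<noteq> {w. (ch,w) \<in> P\<^sup>*}" by auto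
  qed
  then show ?thesis unfolding dep_def using anc_finite[OF assms(1,2)] by (simp add: psubset_card_mono)
qed

lemma phi_bound:
  fixes b w :: "nat \<Rightarrow> rat"
  assumes "finite C" "\<forall>c. \<bar>b c\<bar> \<le> D"
  shows "\<bar>\<Sum>c\<in>C. b c * w c\<bar> \<le> D * (\<Sum>c\<in>C. \<bar>w c\<bar>)"
proof -
  have "\<bar>\<Sum>c\<in>C. b c * w c\<bar> \<le> (\<Sum>c\<in>C. \<bar>b c * w c\<bar>)" using sum_abs by blast
  also have "\<dots> \<le> (\<Sum>c\<in>C. D * \<bar>w c\<bar>)"
    using assms(2) by (intro sum_mono) (simp add: abs_mult mult_right_mono)
  finally show ?thesis by (simp add: sum_distrib_left)
qed

lemma claim:
  fixes a :: "nat \<Rightarrow> nat \<Rightarrow> rat"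
  assumes fin: "finite C" and ints: "\<forall>r c. a r c \<in> \<int>" and bd: "\<forall>r c. \<bar>a r c\<bar> \<le> D"
    and PV: "P \<subseteq> V \<times> V" and finV: "finite V"
    and func: "\<forall>v u w. (v,u) \<in> P \<longrightarrow> (v,w) \<in> P \<longrightarrow> u = w"
    and acyc: "\<forall>v. (v,v) \<notin> P\<^sup>+"
    and edge: "\<forall>s y c. s \<in> V \<longrightarrow> y \<in> V \<longrightarrow> s \<noteq> y \<longrightarrow> c \<in> C \<longrightarrow> a s c \<noteq> 0 \<longrightarrow> a y c \<noteq> 0
        \<longrightarrow> (s,y) \<in> P\<^sup>+ \<or> (y,s) \<in> P\<^sup>+"
    and H: "\<forall>u\<in>V. dep P u \<le> H"
  shows "\<forall>v\<in>V. H + 1 \<le> dep P v + n \<longrightarrow> (\<forall>z. circ a C (subt P v) z \<longrightarrow> bnd C (ff D n) z)"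
proof (induction n)
  case 0
  then show ?case using H by fastforce
next
  case (Suc n)
  have D0: "D \<ge> 0" using bd by (meson abs_ge_zero order.trans)
  define K where "K = ff D n"
  have K1: "K \<ge> 1" unfolding K_def using ff_ge1[OF D0] .
  show ?case
  proof (intro ballI impI allI)
    fix v z assume v: "v \<in> V" and hv: "H + 1 \<le> dep P v + Suc n" and z: "circ a C (subt P v) z"
    define R' where "R' = subt P v - {v}"
    have subV: "subt P v \<subseteq> V"
    proof
      fix u assume "u \<in> subt P v"
      then have "(u,v) \<in> P\<^sup>*" unfolding subt_def by auto
      then show "u \<in> V" using v PV by (cases rule: converse_rtranclE) auto
    qed
    have vin: "v \<in> subt P v" unfolding subt_def by auto
    have IHc: "bnd C K g" if g: "circ a C R' g" for g
    proof -
      have kg: "kerv a C R' g" using g unfolding circ_def by auto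
      obtain c0 where c0: "g c0 \<noteq> 0" using g unfolding circ_def by auto
      then have c0C: "c0 \<in> C" using kg unfolding kerv_def by auto
      show ?thesis
      proof (cases "\<forall>r\<in>R'. a r c0 = 0")
        case True
        then show ?thesis using unit_bnd[OF fin g c0C c0] bnd_mono K1 by blast
      next
        case False
        then obtain r where r: "r \<in> R'" "a r c0 \<noteq> 0" by auto
        then have "(r,v) \<in> P\<^sup>+" unfolding R'_def subt_def by (auto simp add: rtrancl_eq_or_trancl)
        then obtain ch where ch: "(r,ch) \<in> P\<^sup>*" "(ch,v) \<in> P" using tranclD2 by metis
        define S where "S = subt P ch"
        have chV: "ch \<in> V" using ch PV by auto
        have SR: "S \<subseteq> R'"
        proof
          fix u assume "u \<in> S"
          then have "(u,v) \<in> P\<^sup>+" using ch unfolding S_def subt_def by auto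
          then show "u \<in> R'" unfolding R'_def subt_def using acyc by auto
        qed
        have closed: "\<forall>s\<in>S. \<forall>y\<in>R' - S. \<forall>c\<in>C. a s c \<noteq> 0 \<longrightarrow> a y c = 0"
        proof (intro ballI impI)
          fix s y c assume s: "s \<in> S" and y: "y \<in> R' - S" and c: "c \<in> C" and as: "a s c \<noteq> 0"
          have nr: "(y,s) \<notin> P\<^sup>+ \<and> (s,y) \<notin> P\<^sup>+"
            using closed_sub[OF func acyc ch(2)] s y unfolding S_def R'_def by auto
          have "s \<in> V" "y \<in> V" "s \<noteq> y" using s y SR subV unfolding R'_def by auto
          then show "a y c = 0" using edge c as nr by blast
        qed
        have rS: "r \<in> S" using ch unfolding S_def subt_def by auto
        have gS: "circ a C S g" using circ_restrict[OF g SR closed c0C c0 rS r(2)] .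
        have "dep P v < dep P ch" using dep_child[OF PV finV acyc ch(2)] .
        then have "H + 1 \<le> dep P ch + n" using hv by simp
        then show ?thesis using Suc.IH chV gS unfolding K_def S_def by blast
      qed
    qed
    have kz: "kerv a C (subt P v) z" using z unfolding circ_def by auto
    have kz': "kerv a C R' z" using kerv_mono[OF kz] unfolding R'_def by auto
    have z0: "z \<noteq> (\<lambda>_. 0)" using z unfolding circ_def by auto
    define \<phi> where "\<phi> = (\<lambda>x. \<Sum>c\<in>C. a v c * x c)"
    have phz: "\<phi> z = 0" using kz vin unfolding kerv_def \<phi>_def by auto
    have kerR: "kerv a C (subt P v) x" if "kerv a C R' x" "\<phi> x = 0" for x
      using that unfolding kerv_def R'_def \<phi>_def by auto
    have getw: "\<exists>w. kerv a C R' w \<and> conf w z \<and> w \<noteq> (\<lambda>_. 0) \<and> (\<forall>c. w c \<in> \<int>)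
          \<and> (\<Sum>c\<in>C. \<bar>w c\<bar>) \<le> K \<and> s * \<phi> w \<le> 0"
      if ss: "s = 1 \<or> s = -1" for s
    proof -
      have "(\<Sum>c\<in>C. (s * a v c) * z c) \<le> 0" using phz unfolding \<phi>_def
        by (simp add: mult.assoc sum_distrib_left[symmetric])
      then obtain g where g: "circ a C R' g" "conf g z" "(\<Sum>c\<in>C. (s * a v c) * g c) \<le> 0"
        using exists_conf_circ_phi[OF fin kz' z0, of "\<lambda>c. s * a v c"] by blast
      obtain t where t: "t > 0" "\<forall>c. t * g c \<in> \<int>" "(\<Sum>c\<in>C. \<bar>t * g c\<bar>) \<le> K"
        using IHc[OF g(1)] unfolding bnd_def by blast
      define w where "w = (\<lambda>c. t * g c)"
      have "kerv a C R' w" unfolding w_def using kerv_scale g(1) unfolding circ_def by auto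
      moreover have "conf w z" using g(2) t(1) unfolding w_def conf_def
        by (auto simp: mult.assoc)
      moreover have "w \<noteq> (\<lambda>_. 0)" using g(1) t(1) unfolding w_def circ_def by (auto simp: fun_eq_iff)
      moreover have "s * \<phi> w = t * (\<Sum>c\<in>C. (s * a v c) * g c)" unfolding \<phi>_def w_def
        by (simp add: sum_distrib_left algebra_simps)
      then have "s * \<phi> w \<le> 0" using t(1) g(3) by (simp add: mult_pos_neg mult_nonneg_nonpos)
      ultimately show ?thesis using t unfolding w_def by blast
    qed
    obtain w1 where w1: "kerv a C R' w1" "conf w1 z" "w1 \<noteq> (\<lambda>_. 0)" "\<forall>c. w1 c \<in> \<int>"
        "(\<Sum>c\<in>C. \<bar>w1 c\<bar>) \<le> K" "\<phi> w1 \<le> 0"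
      using getw[of 1] by auto
    obtain w2 where w2: "kerv a C R' w2" "conf w2 z" "w2 \<noteq> (\<lambda>_. 0)" "\<forall>c. w2 c \<in> \<int>"
        "(\<Sum>c\<in>C. \<bar>w2 c\<bar>) \<le> K" "\<phi> w2 \<ge> 0"
      using getw[of "-1"] by auto
    have Kle: "K \<le> ff D (Suc n)" unfolding K_def using D0 by simp
    have fromw: "bnd C (ff D (Suc n)) z" if w: "kerv a C (subt P v) w" "conf w z" "w \<noteq> (\<lambda>_. 0)"
       "\<forall>c. w c \<in> \<int>" "(\<Sum>c\<in>C. \<bar>w c\<bar>) \<le> ff D (Suc n)" for w
    proof -
      obtain s where s: "s > 0" "w = (\<lambda>c. s * z c)" using mult_circ[OF z w(1-3)] by blast
      show ?thesis unfolding bnd_def using s w(4,5) by (intro exI[of _ s]) auto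
    qed
    show "bnd C (ff D (Suc n)) z"
    proof (cases "\<phi> w1 = 0")
      case True
      then show ?thesis using fromw[OF kerR[OF w1(1) True] w1(2,3,4)] w1(5) Kle by linarith
    next
      case F1: False
      show ?thesis
      proof (cases "\<phi> w2 = 0")
        case True
        then show ?thesis using fromw[OF kerR[OF w2(1) True] w2(2,3,4)] w2(5) Kle by linarith
      next
        case False
        define \<rho>1 where "\<rho>1 = \<phi> w1"
        define \<rho>2 where "\<rho>2 = \<phi> w2"
        have r1: "\<rho>1 < 0" using F1 w1(6) unfolding \<rho>1_def by simp
        have r2: "\<rho>2 > 0" using False w2(6) unfolding \<rho>2_def by simp
        define w where "w = (\<lambda>c. \<rho>2 * w1 c + (- \<rho>1) * w2 c)"
        have kw': "kerv a C R' w" unfolding w_def using kerv_lin[OF w1(1) w2(1)] .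
        have "\<phi> w = \<rho>2 * \<phi> w1 - \<rho>1 * \<phi> w2" unfolding w_def \<phi>_def
          by (simp add: sum.distrib sum_distrib_left algebra_simps sum_subtractf)
        then have pw: "\<phi> w = 0" unfolding \<rho>1_def \<rho>2_def by simp
        have cw: "conf w z" unfolding conf_def
        proof (intro allI conjI impI)
          fix c
          have "0 \<le> w1 c * z c" "0 \<le> w2 c * z c" using w1(2) w2(2) unfolding conf_def by auto
          then have "0 \<le> \<rho>2 * (w1 c * z c) + (-\<rho>1) * (w2 c * z c)" using r1 r2
            by (metis add_nonneg_nonneg less_eq_rat_def mult_nonneg_nonneg neg_0_le_iff_le)
          then show "0 \<le> w c * z c" unfolding w_def by (simp add: algebra_simps)
          show "z c = 0 \<Longrightarrow> w c = 0" using w1(2) w2(2) unfolding conf_def w_def by auto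
        qed
        have nw: "w \<noteq> (\<lambda>_. 0)"
        proof
          assume w0: "w = (\<lambda>_. 0)"
          obtain c where c: "w1 c \<noteq> 0" using w1(3) by auto
          then have "z c \<noteq> 0" using w1(2) unfolding conf_def by auto
          have a1: "0 < w1 c * z c" using w1(2) c \<open>z c \<noteq> 0\<close> unfolding conf_def
            by (metis less_eq_rat_def mult_eq_0_iff)
          have a2: "0 \<le> w2 c * z c" using w2(2) unfolding conf_def by auto
          have "0 < \<rho>2 * (w1 c * z c)" using a1 r2 by simp
          moreover have "0 \<le> (-\<rho>1) * (w2 c * z c)" using a2 r1 mult_nonneg_nonneg[of "-\<rho>1" "w2 c * z c"] by linarith
          ultimately have "0 < \<rho>2 * (w1 c * z c) + (-\<rho>1) * (w2 c * z c)" by linarith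
          also have "\<dots> = w c * z c" unfolding w_def by (simp add: algebra_simps)
          finally show False using w0 by simp
        qed
        have phint: "\<phi> x \<in> \<int>" if "\<forall>c. x c \<in> \<int>" for x
          unfolding \<phi>_def using ints that by (intro Ints_sum Ints_mult) auto
        have wint: "\<forall>c. w c \<in> \<int>" unfolding w_def using phint[OF w1(4)] phint[OF w2(4)] w1(4) w2(4)
          unfolding \<rho>1_def \<rho>2_def by (auto intro!: Ints_add Ints_mult Ints_minus)
        have b1: "\<bar>\<rho>1\<bar> \<le> D * K" unfolding \<rho>1_def \<phi>_def
          using phi_bound[OF fin, of "a v" D w1] bd w1(5) D0 by (meson mult_left_mono order.trans)
        have b2: "\<bar>\<rho>2\<bar> \<le> D * K" unfolding \<rho>2_def \<phi>_def
          using phi_bound[OF fin, of "a v" D w2] bd w2(5) D0 by (meson mult_left_mono order.trans)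
        have "(\<Sum>c\<in>C. \<bar>w c\<bar>) \<le> (\<Sum>c\<in>C. \<bar>\<rho>2\<bar> * \<bar>w1 c\<bar> + \<bar>\<rho>1\<bar> * \<bar>w2 c\<bar>)"
          unfolding w_def by (intro sum_mono) (metis abs_minus_cancel abs_mult abs_triangle_ineq)
        also have "\<dots> = \<bar>\<rho>2\<bar> * (\<Sum>c\<in>C. \<bar>w1 c\<bar>) + \<bar>\<rho>1\<bar> * (\<Sum>c\<in>C. \<bar>w2 c\<bar>)"
          by (simp add: sum.distrib sum_distrib_left)
        also have "\<dots> \<le> (D * K) * K + (D * K) * K"
          using b1 b2 w1(5) w2(5) K1 D0
          by (intro add_mono mult_mono) auto
        also have "\<dots> \<le> ff D (Suc n)" using K1 unfolding K_def by (simp add: power2_eq_square)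
        finally have "(\<Sum>c\<in>C. \<bar>w c\<bar>) \<le> ff D (Suc n)" .
        then show ?thesis using fromw[OF kerR[OF kw' pw] cw nw wint] by blast
      qed
    qed
  qed
qed

lemma denom_le:
  fixes q :: rat and T :: int
  assumes "T > 0" "of_int T * q \<in> \<int>"
  shows "snd (quotient_of q) \<le> T"
proof -
  obtain p d where pd: "quotient_of q = (p, d)" by (cases "quotient_of q") auto
  have q: "q = of_int p / of_int d" using quotient_of_div[OF pd] .
  have d0: "d > 0" using quotient_of_denom_pos[OF pd] .
  have cop: "coprime p d" using quotient_of_coprime[OF pd] .
  obtain k where k: "of_int T * q = of_int k" using assms(2) Ints_cases by metis
  then have "of_int (T * p) = (of_int (k * d) :: rat)" using q d0 by (simp add: field_simps)
  then have "T * p = k * d" by (simp only: of_int_eq_iff)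
  then have "d dvd T * p" by (metis dvd_triv_right)
  then have "d dvd T" using cop by (metis coprime_commute coprime_dvd_mult_left_iff)
  then have "d \<le> T" using assms(1) by (simp add: zdvd_imp_le)
  then show ?thesis using pd by simp
qed

lemma reach_root:
  fixes P :: "(nat \<times> nat) set"
  assumes PV: "P \<subseteq> V \<times> V" and finV: "finite V" and acyc: "\<forall>v. (v,v) \<notin> P\<^sup>+"
    and r0: "r0 \<in> V" "\<forall>u. (r0,u) \<notin> P" and uniq: "\<forall>r. r \<in> V \<and> (\<forall>u. (r,u) \<notin> P) \<longrightarrow> r = r0"
  shows "u \<in> V \<Longrightarrow> (u, r0) \<in> P\<^sup>*"
proof (induction "dep P u" arbitrary: u rule: less_induct)
  case (less u)
  show ?case
  proof (cases "\<exists>p. (u,p) \<in> P")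
    case True
    then obtain p where p: "(u,p) \<in> P" by auto
    then have "p \<in> V" using PV by auto
    moreover have "dep P p < dep P u" using dep_child[OF PV finV acyc p] .
    ultimately have "(p, r0) \<in> P\<^sup>*" using less.hyps by blast
    then show ?thesis using p by (meson converse_rtrancl_into_rtrancl)
  next
    case False
    then have "u = r0" using uniq less.prems by blast
    then show ?thesis by simp
  qed
qed

theorem corollary3:
  shows "\<exists>g :: nat \<Rightarrow> int \<Rightarrow> int.
    \<forall>(A :: int mat) m n P B.
      A \<in> carrier_mat m n \<longrightarrow>
      td_decomposition {0..<m} (dual_graph_edge A) P \<longrightarrow>
      B \<subseteq> {0..<n} \<longrightarrow> card B = m \<longrightarrow>
      invertible_mat (map_mat rat_of_int (submatrix A UNIV B)) \<longrightarrow>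
      (\<forall>Binv \<in> carrier_mat m m.
         map_mat rat_of_int (submatrix A UNIV B) * Binv = 1\<^sub>m m \<longrightarrow>
         fr Binv \<le> g (tree_height {0..<m} P) (max_abs_entry A))"
proof (intro exI[of _ "\<lambda>h \<Delta>. \<lceil>ff (of_int \<bar>\<Delta>\<bar> + 1) h\<rceil>"] allI impI ballI)
  fix A :: "int mat" and m n P B and Binv :: "rat mat"
  assume Ac: "A \<in> carrier_mat m n" and td: "td_decomposition {0..<m} (dual_graph_edge A) P"
    and Bs: "B \<subseteq> {0..<n}" and cB: "card B = m"
    and inv: "invertible_mat (map_mat rat_of_int (submatrix A UNIV B))"
    and Bc: "Binv \<in> carrier_mat m m"
    and MB: "map_mat rat_of_int (submatrix A UNIV B) * Binv = 1\<^sub>m m"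
  define M where "M = map_mat rat_of_int (submatrix A UNIV B)"
  define \<Delta> where "\<Delta> = max_abs_entry A"
  define D :: rat where "D = of_int \<bar>\<Delta>\<bar> + 1"
  define H where "H = tree_height {0..<m} P"
  define K where "K = ff D H"
  have D0: "D \<ge> 0" unfolding D_def by simp
  have K1: "K \<ge> 1" unfolding K_def using ff_ge1[OF D0] .
  have dr: "dim_row A = m" "dim_col A = n" using Ac by auto
  have Beq: "{j. j < n \<and> j \<in> B} = B" using Bs by auto
  have Mc: "M \<in> carrier_mat m m"
  proof -
    have "dim_row (submatrix A UNIV B) = m" using dr(1) by (simp add: dim_submatrix)
    moreover have "dim_col (submatrix A UNIV B) = m" unfolding dim_submatrix dr(2) Beq cB ..
    ultimately show ?thesis unfolding M_def by auto
  qed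
  have Ment: "M $$ (i,j) = of_int (A $$ (i, pick B j))" if "i < m" "j < m" for i j
  proof -
    have "card {i. i < dim_row A \<and> i \<in> (UNIV::nat set)} = m" using dr by simp
    moreover have "card {j. j < dim_col A \<and> j \<in> B} = m" unfolding dr(2) Beq cB ..
    then have e: "submatrix A UNIV B $$ (i,j) = A $$ (pick UNIV i, pick B j)"
      using that \<open>card {i. i < dim_row A \<and> i \<in> (UNIV::nat set)} = m\<close>
      by (intro submatrix_index) auto
    have d1: "i < dim_row (submatrix A UNIV B)" "j < dim_col (submatrix A UNIV B)"
      using Mc that unfolding M_def by auto
    then have "M $$ (i,j) = of_int (submatrix A UNIV B $$ (i,j))" unfolding M_def by simp
    then show ?thesis using e by (simp add: pick_UNIV)
  qed
  have pickB: "pick B j \<in> B" if "j < m" for j using pick_in_set_le[of j B] that cB by simp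
  have Abd: "\<bar>A $$ (i,k)\<bar> \<le> \<Delta>" if "i < m" "k < n" for i k
  proof -
    have fin: "finite {\<bar>A $$ (i,j)\<bar> | i j. i < dim_row A \<and> j < dim_col A}"
    proof -
      have "{\<bar>A $$ (i,j)\<bar> | i j. i < dim_row A \<and> j < dim_col A} \<subseteq> (\<lambda>(i,j). \<bar>A $$ (i,j)\<bar>) ` ({..<dim_row A} \<times> {..<dim_col A})"
        by auto
      then show ?thesis using finite_subset by blast
    qed
    have "\<bar>A $$ (i,k)\<bar> \<in> {\<bar>A $$ (i,j)\<bar> | i j. i < dim_row A \<and> j < dim_col A}" using that dr by auto
    then show ?thesis unfolding \<Delta>_def max_abs_entry_def using fin by (intro Max_ge) auto
  qed
  have BM: "Binv * M = 1\<^sub>m m" using mat_mult_left_right_inverse[OF Mc Bc] MB unfolding M_def by auto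
  have fr_goal: "snd (quotient_of (Binv $$ (i, j0))) \<le> \<lceil>K\<rceil>" if i: "i < m" and j0: "j0 < m" for i j0
  proof -
    define C where "C = {0..<Suc m}"
    define a where "a = (\<lambda>r c. if r < m \<and> c < m then M $$ (r,c) else if c = m \<and> r = j0 then (-1::rat) else 0)"
    define z where "z = (\<lambda>c. if c < m then Binv $$ (c, j0) else if c = m then (1::rat) else 0)"
    define V where "V = {0..<m}"
    have finC: "finite C" unfolding C_def by simp
    have aint: "\<forall>r c. a r c \<in> \<int>" unfolding a_def using Ment by auto
    have abd: "\<forall>r c. \<bar>a r c\<bar> \<le> D"
    proof (intro allI)
      fix r c
      show "\<bar>a r c\<bar> \<le> D"
      proof (cases "r < m \<and> c < m")
        case True
        then have "\<bar>a r c\<bar> = of_int \<bar>A $$ (r, pick B c)\<bar>" unfolding a_def using Ment by simp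
        also have "\<dots> \<le> of_int \<Delta>" using Abd True pickB Bs by fastforce
        also have "\<dots> \<le> D" unfolding D_def by simp
        finally show ?thesis .
      next
        case False then show ?thesis unfolding a_def D_def by auto
      qed
    qed
    from td have rt: "rooted_tree V P" and ecl: "\<forall>u v. dual_graph_edge A u v \<longrightarrow> closure_adj P u v"
      unfolding td_decomposition_def V_def by auto
    have finV: "finite V" and PV: "P \<subseteq> V \<times> V"
      and func: "\<forall>v u w. (v,u) \<in> P \<longrightarrow> (v,w) \<in> P \<longrightarrow> u = w"
      and acyc: "\<forall>v. (v,v) \<notin> P\<^sup>+" using rt unfolding rooted_tree_def by auto
    have "V \<noteq> {}" using i unfolding V_def by auto
    then obtain r0 where r0: "r0 \<in> V" "\<forall>u. (r0,u) \<notin> P"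
      and uniq: "\<forall>r. r \<in> V \<and> (\<forall>u. (r,u) \<notin> P) \<longrightarrow> r = r0"
      using rt unfolding rooted_tree_def by metis
    have edge: "\<forall>s y c. s \<in> V \<longrightarrow> y \<in> V \<longrightarrow> s \<noteq> y \<longrightarrow> c \<in> C \<longrightarrow> a s c \<noteq> 0 \<longrightarrow> a y c \<noteq> 0
        \<longrightarrow> (s,y) \<in> P\<^sup>+ \<or> (y,s) \<in> P\<^sup>+"
    proof (intro allI impI)
      fix s y c assume s: "s \<in> V" and y: "y \<in> V" and sy: "s \<noteq> y" and c: "c \<in> C"
        and as: "a s c \<noteq> 0" and ay: "a y c \<noteq> 0"
      have cm: "c < m" using s y sy as ay c unfolding a_def V_def C_def by (auto split: if_splits)
      have "A $$ (s, pick B c) \<noteq> 0" "A $$ (y, pick B c) \<noteq> 0"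
        using as ay s y cm Ment unfolding a_def V_def by auto
      moreover have "pick B c < dim_col A" using pickB[OF cm] Bs dr by auto
      ultimately have "dual_graph_edge A s y" unfolding dual_graph_edge_def using s y sy dr V_def by auto
      then have "closure_adj P s y" using ecl by auto
      then show "(s,y) \<in> P\<^sup>+ \<or> (y,s) \<in> P\<^sup>+" unfolding closure_adj_def ancestor_def by auto
    qed
    have Hb: "\<forall>u\<in>V. dep P u \<le> H"
    proof
      fix u assume u: "u \<in> V"
      have "finite (insert 0 ((\<lambda>v. card {u. (v,u) \<in> P\<^sup>*}) ` V))" using finV by simp
      then show "dep P u \<le> H" unfolding H_def tree_height_def dep_def V_def[symmetric]
        using u by (intro Max_ge) auto
    qed
    have subV: "subt P r0 = V"
    proof
      show "V \<subseteq> subt P r0" unfolding subt_def using reach_root[OF PV finV acyc r0 uniq] by auto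
      show "subt P r0 \<subseteq> V"
      proof
        fix u assume "u \<in> subt P r0"
        then have "(u,r0) \<in> P\<^sup>*" unfolding subt_def by auto
        then show "u \<in> V" using r0 PV by (cases rule: converse_rtranclE) auto
      qed
    qed
    have dep0: "dep P r0 = 1"
    proof -
      have "{w. (r0,w) \<in> P\<^sup>*} = {r0}"
        using r0(2) by (auto elim: converse_rtranclE)
      then show ?thesis unfolding dep_def by simp
    qed
    have zM: "z m = 1" unfolding z_def by simp
      have rowsum: "(\<Sum>c\<in>C. a r c * x c) = (\<Sum>c=0..<m. M $$ (r,c) * x c) + a r m * x m" if "r < m" for r x
      proof -
        have "(\<Sum>c\<in>C. a r c * x c) = (\<Sum>c=0..<m. a r c * x c) + a r m * x m"
          unfolding C_def by simp
        moreover have "(\<Sum>c=0..<m. a r c * x c) = (\<Sum>c=0..<m. M $$ (r,c) * x c)"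
          using that unfolding a_def by (intro sum.cong) auto
        ultimately show ?thesis by simp
      qed
      have kzV: "kerv a C V z"
        unfolding kerv_def
      proof (intro conjI allI impI ballI)
        fix c assume "c \<notin> C" then show "z c = 0" unfolding z_def C_def by auto
      next
        fix r assume "r \<in> V"
        then have r: "r < m" unfolding V_def by auto
        have "(M * Binv) $$ (r, j0) = (\<Sum>c=0..<m. M $$ (r,c) * Binv $$ (c, j0))"
          using Mc Bc r j0 by (simp add: scalar_prod_def)
        moreover have "(M * Binv) $$ (r, j0) = (if r = j0 then 1 else 0)"
          using MB r j0 unfolding M_def by simp
        moreover have "(\<Sum>c=0..<m. M $$ (r,c) * z c) = (\<Sum>c=0..<m. M $$ (r,c) * Binv $$ (c, j0))"
          unfolding z_def by (intro sum.cong) auto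
        ultimately show "(\<Sum>c\<in>C. a r c * z c) = 0" using rowsum[OF r, of z] zM r unfolding a_def by auto
      qed
    have circz: "circ a C V z"
      unfolding circ_def
    proof (intro conjI allI impI)
      show "kerv a C V z" by (rule kzV)
      show "z \<noteq> (\<lambda>_. 0)" using zM by (metis zero_neq_one)
    next
      fix y assume ky: "kerv a C V y" and sy: "suppv y \<subseteq> suppv z"
      define t where "t = y m"
      define u where "u = (\<lambda>c. y c - t * z c)"
      have kz: "kerv a C V z" using \<open>kerv a C V z\<close> .
      have ku: "kerv a C V u" unfolding u_def using kerv_diff[OF ky kz] .
      have um: "u m = 0" unfolding u_def t_def using zM by simp
      define uv where "uv = vec m u"
      have uvc: "uv \<in> carrier_vec m" unfolding uv_def by simp
      have Mu: "M *\<^sub>v uv = 0\<^sub>v m"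
      proof (rule eq_vecI)
        show "dim_vec (M *\<^sub>v uv) = dim_vec (0\<^sub>v m)" using Mc by simp
        fix r assume "r < dim_vec (0\<^sub>v m)"
        then have r: "r < m" by simp
        have "(M *\<^sub>v uv) $ r = (\<Sum>c=0..<m. M $$ (r,c) * u c)"
          using Mc r unfolding uv_def by (simp add: scalar_prod_def)
        also have "\<dots> = (\<Sum>c\<in>C. a r c * u c)" using rowsum[OF r, of u] um by simp
        also have "\<dots> = 0" using ku r unfolding kerv_def V_def by auto
        finally show "(M *\<^sub>v uv) $ r = 0\<^sub>v m $ r" using r by simp
      qed
      have "uv = (Binv * M) *\<^sub>v uv" unfolding BM using one_mult_mat_vec[OF uvc] by (rule sym)
      also have "\<dots> = Binv *\<^sub>v (M *\<^sub>v uv)" using assoc_mult_mat_vec[OF Bc Mc uvc] .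
      also have "\<dots> = 0\<^sub>v m"
      proof (rule eq_vecI)
        show "dim_vec (Binv *\<^sub>v (M *\<^sub>v uv)) = dim_vec (0\<^sub>v m)" using Bc by simp
        fix r assume "r < dim_vec (0\<^sub>v m)"
        then have r: "r < m" by simp
        have dB: "dim_row Binv = m" "dim_col Binv = m" using Bc by auto
        have rowc: "row Binv r \<in> carrier_vec m" using row_carrier[of Binv r] dB(2) by simp
        have "(Binv *\<^sub>v (0\<^sub>v m)) $ r = row Binv r \<bullet> 0\<^sub>v m" using index_mult_mat_vec[of r Binv] r dB(1) by simp
        also have "\<dots> = 0" using scalar_prod_right_zero[OF rowc] .
        also have "\<dots> = 0\<^sub>v m $ r" using r by simp
        finally show "(Binv *\<^sub>v (M *\<^sub>v uv)) $ r = 0\<^sub>v m $ r" unfolding Mu .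
      qed
      finally have "uv = 0\<^sub>v m" .
      then have "u c = 0" if "c < m" for c using that unfolding uv_def
        by (metis index_vec index_zero_vec(1))
      then have "y c = t * z c" for c
      proof (cases "c < m")
        case True then show ?thesis using \<open>\<And>c. c < m \<Longrightarrow> u c = 0\<close> unfolding u_def by simp
      next
        case False
        show ?thesis
        proof (cases "c = m")
          case True then show ?thesis unfolding t_def using zM by simp
        next
          case False
          then have "z c = 0" using \<open>\<not> c < m\<close> unfolding z_def by simp
          then have "y c = 0" using sy unfolding suppv_def by auto
          then show ?thesis using \<open>z c = 0\<close> by simp
        qed
      qed
      then show "\<exists>t. y = (\<lambda>c. t * z c)" by auto
    qed
    have "bnd C (ff D H) z"
      using claim[OF finC aint abd PV finV func acyc edge Hb, of H] r0(1) dep0 circz subV by auto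
    then obtain s where s: "s > 0" "\<forall>c. s * z c \<in> \<int>" "(\<Sum>c\<in>C. \<bar>s * z c\<bar>) \<le> K"
      unfolding bnd_def K_def by blast
    have sInt: "s \<in> \<int>" using s(2) zM by (metis mult.right_neutral)
    then obtain T where T: "s = of_int T" using Ints_cases by metis
    have "\<bar>s * z m\<bar> \<le> (\<Sum>c\<in>C. \<bar>s * z c\<bar>)"
      using finC unfolding C_def by (intro member_le_sum) auto
    then have sK: "s \<le> K" using s(3) zM s(1) by simp
    have "s * Binv $$ (i, j0) \<in> \<int>" using s(2)[rule_format, of i] i unfolding z_def by simp
    then have "snd (quotient_of (Binv $$ (i, j0))) \<le> T" using denom_le[of T] s(1) T by simp
    moreover have "of_int T \<le> K" using sK T by simp
    then have "T \<le> \<lceil>K\<rceil>" by (metis ceiling_mono ceiling_of_int)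
    ultimately show ?thesis by simp
  qed
  have finS: "finite {snd (quotient_of (Binv $$ (i,j))) | i j. i < dim_row Binv \<and> j < dim_col Binv}"
  proof -
    have "{snd (quotient_of (Binv $$ (i,j))) | i j. i < dim_row Binv \<and> j < dim_col Binv}
       \<subseteq> (\<lambda>(i,j). snd (quotient_of (Binv $$ (i,j)))) ` ({..<dim_row Binv} \<times> {..<dim_col Binv})"
      by auto
    then show ?thesis using finite_subset by blast
  qed
  have "fr Binv \<le> \<lceil>K\<rceil>"
    unfolding fr_def
  proof (subst Max_le_iff)
    show "finite (insert 1 {snd (quotient_of (Binv $$ (i,j))) | i j. i < dim_row Binv \<and> j < dim_col Binv})"
      using finS by simp
    show "\<forall>x\<in>insert 1 {snd (quotient_of (Binv $$ (i,j))) | i j. i < dim_row Binv \<and> j < dim_col Binv}. x \<le> \<lceil>K\<rceil>"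
      using fr_goal Bc K1 by (auto simp: le_ceiling_iff)
  qed simp
  then show "fr Binv \<le> \<lceil>ff (of_int \<bar>max_abs_entry A\<bar> + 1) (tree_height {0..<m} P)\<rceil>"
    unfolding K_def D_def H_def \<Delta>_def .
qed

end
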